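(* Let $n,m$ be positive integers and let $A,B$ be positive real numbers. On the Siegel–Jacobi space $\mathbb{H}_{n,m}=\mathbb{H}_n\times\mathbb{C}^{(m,n)}$, with coordinates $(Z,W)$, $Z=X+iY$, $W=U+iV$ ($X,Y,U,V$ real), the symmetric tensor \begin{align*} ds_{n,m;A,B}^2&= A\,\sigma\big(Y^{-1}dZ\,Y^{-1}d\overline{Z}\big)\\ &\quad+B\,\Big\{\sigma\big(Y^{-1}\,{}^tV\,V\,Y^{-1}dZ\,Y^{-1}d\overline{Z}\big)+\sigma\big(Y^{-1}\,{}^t(dW)\,d\overline{W}\big)\\ &\qquad\quad-\sigma\big(V\,Y^{-1}dZ\,Y^{-1}\,{}^t(d\overline{W})\big)-\sigma\big(V\,Y^{-1}d\overline{Z}\,Y^{-1}\,{}^t(dW)\big)\Big\} \end{align*} is a Riemannian metric on $\mathbb{H}_{n,m}$ which is invariant under the natural action of the Jacobi group $G^J$ on $\mathbb{H}_{n,m}$.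
   Context: $\mathbb{H}_n=\{Z\in\mathbb{C}^{(n,n)}: Z={}^tZ,\ \operatorname{Im}Z>0\}$ is the Siegel upper half space; $\mathbb{C}^{(m,n)}$ denotes complex $m\times n$ matrices; ${}^tM$ is the transpose and $\sigma(M)$ the trace of a square matrix. $dZ=(dz_{\mu\nu})$, $d\overline Z=(d\overline z_{\mu\nu})$, $dW=(dw_{kl})$, $d\overline W=(d\overline w_{kl})$ are matrices of differentials. $Sp(n,\mathbb{R})=\{M\in\mathbb{R}^{(2n,2n)}: {}^tMJ_nM=J_n\}$ with $J_n=\begin{pmatrix}0&E_n\\-E_n&0\end{pmatrix}$, $E_n$ the identity. The Heisenberg group $H^{(n,m)}_{\mathbb{R}}=\{(\lambda,\mu;\kappa):\lambda,\mu\in\mathbb{R}^{(m,n)},\kappa\in\mathbb{R}^{(m,m)},\ \kappa+\mu\,{}^t\lambda\text{ symmetric}\}$ has product $(\lambda,\mu;\kappa)\circ(\lambda',\mu';\kappa')=(\lambda+\lambda',\mu+\mu';\kappa+\kappa'+\lambda\,{}^t\mu'-\mu\,{}^t\lambda')$. The Jacobi group is $G^J=Sp(n,\mathbb{R})\ltimes H^{(n,m)}_{\mathbb{R}}$ with product $(M,(\lambda,\mu;\kappa))\cdot(M',(\lambda',\mu';\kappa'))=(MM',(\tilde\lambda+\lambda',\tilde\mu+\mu';\kappa+\kappa'+\tilde\lambda\,{}^t\mu'-\tilde\mu\,{}^t\lambda'))$ where $(\tilde\lambda,\tilde\mu)=(\lambda,\mu)M'$. Its natural action on $\mathbb{H}_{n,m}$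 is $(M,(\lambda,\mu;\kappa))\cdot(Z,W)=\big((AZ+B)(CZ+D)^{-1},\,(W+\lambda Z+\mu)(CZ+D)^{-1}\big)$ for $M=\begin{pmatrix}A&B\\C&D\end{pmatrix}$ (here $A,B,C,D$ are the $n\times n$ blocks of $M$, unrelated to the positive constants $A,B$ of the metric). *)

theory Defs
  imports "HOL-Analysis.Analysis"
begin

text \<open>Matrices are type-indexed: an n x n complex matrix is complex^'n^'n,
  an m x n complex matrix is complex^'n^'m (rows indexed by 'm).\<close>

definition cmat :: "real^'c^'r \<Rightarrow> complex^'c^'r" where
  "cmat M = (\<chi> i j. complex_of_real (M $ i $ j))"

definition mconj :: "complex^'c^'r \<Rightarrow> complex^'c^'r" where
  "mconj M = (\<chi> i j. cnj (M $ i $ j))"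

definition mRe :: "complex^'c^'r \<Rightarrow> real^'c^'r" where
  "mRe M = (\<chi> i j. Re (M $ i $ j))"

definition mIm :: "complex^'c^'r \<Rightarrow> real^'c^'r" where
  "mIm M = (\<chi> i j. Im (M $ i $ j))"

definition symmetric_mat :: "'a^'n^'n \<Rightarrow> bool" where
  "symmetric_mat M \<longleftrightarrow> transpose M = M"

definition posdef :: "real^'n^'n \<Rightarrow> bool" where
  "posdef Y \<longleftrightarrow> symmetric_mat Y \<and> (\<forall>x. x \<noteq> 0 \<longrightarrow> x \<bullet> (Y *v x) > 0)"

definition siegel_H :: "(complex^'n^'n) set" where
  "siegel_H = {Z. symmetric_mat Z \<and> posdef (mIm Z)}"

definition siegel_jacobi :: "((complex^'n^'n) \<times> (complex^'n^'m)) set" where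
  "siegel_jacobi = siegel_H \<times> UNIV"

text \<open>2n x 2n real matrices indexed by 'n + 'n, blocks M = (A B; C D).\<close>
definition blkA :: "real^('n+'n)^('n+'n) \<Rightarrow> real^'n^'n" where
  "blkA M = (\<chi> i j. M $ Inl i $ Inl j)"
definition blkB :: "real^('n+'n)^('n+'n) \<Rightarrow> real^'n^'n" where
  "blkB M = (\<chi> i j. M $ Inl i $ Inr j)"
definition blkC :: "real^('n+'n)^('n+'n) \<Rightarrow> real^'n^'n" where
  "blkC M = (\<chi> i j. M $ Inr i $ Inl j)"
definition blkD :: "real^('n+'n)^('n+'n) \<Rightarrow> real^'n^'n" where
  "blkD M = (\<chi> i j. M $ Inr i $ Inr j)"

definition J_mat :: "real^('n::finite+'n)^('n+'n)" where
  "J_mat = (\<chi> i j. case (i, j) of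
      (Inl a, Inr b) \<Rightarrow> (if a = b then 1 else 0)
    | (Inr a, Inl b) \<Rightarrow> (if a = b then -1 else 0)
    | _ \<Rightarrow> 0)"

definition Sp :: "(real^('n::finite+'n)^('n+'n)) set" where
  "Sp = {M. transpose M ** J_mat ** M = J_mat}"

definition heisenberg :: "((real^'n^'m) \<times> (real^'n^'m) \<times> (real^'m^'m)) set" where
  "heisenberg = {(l, u, k). symmetric_mat (k + u ** transpose l)}"

definition jacobi_group ::
  "((real^('n+'n)^('n+'n)) \<times> ((real^'n^'m) \<times> (real^'n^'m) \<times> (real^'m^'m))) set" where
  "jacobi_group = Sp \<times> heisenberg"

definition jacobi_act ::
  "((real^('n+'n)^('n+'n)) \<times> ((real^'n^'m) \<times> (real^'n^'m) \<times> (real^'m^'m)))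
   \<Rightarrow> (complex^'n^'n) \<times> (complex^'n^'m) \<Rightarrow> (complex^'n^'n) \<times> (complex^'n^'m)" where
  "jacobi_act g p =
     (let M = fst g; l = fst (snd g); u = fst (snd (snd g));
          Z = fst p; W = snd p;
          R = matrix_inv (cmat (blkC M) ** Z + cmat (blkD M))
      in ((cmat (blkA M) ** Z + cmat (blkB M)) ** R,
          (W + cmat l ** Z + cmat u) ** R))"

text \<open>The tensor ds^2_{n,m;A,B} at the point (Z,W), evaluated on the
  tangent vector (dZ,dW) (dZ symmetric); its value is a complex number.\<close>
definition ds2 :: "real \<Rightarrow> real \<Rightarrow> (complex^'n^'n) \<times> (complex^'n^'m)
    \<Rightarrow> (complex^'n^'n) \<times> (complex^'n^'m) \<Rightarrow> complex" where
  "ds2 a b p v =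
     (let Z = fst p; W = snd p; dZ = fst v; dW = snd v;
          Y = mIm Z; V = cmat (mIm W); Yi = cmat (matrix_inv Y)
      in complex_of_real a * trace (Yi ** dZ ** Yi ** mconj dZ)
         + complex_of_real b *
           ( trace (Yi ** transpose V ** V ** Yi ** dZ ** Yi ** mconj dZ)
           + trace (Yi ** transpose dW ** mconj dW)
           - trace (V ** Yi ** dZ ** Yi ** transpose (mconj dW))
           - trace (V ** Yi ** mconj dZ ** Yi ** transpose dW)))"

end

theory Submission
  imports Defs
begin


definition csc :: "complex \<Rightarrow> complex^'c^'r \<Rightarrow> complex^'c^'r" where
  "csc c M = (\<chi> i j. c * M $ i $ j)"

lemma cmat_mult: "cmat (A ** B) = cmat A ** cmat B"
  by (simp add: cmat_def matrix_matrix_mult_def vec_eq_iff)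
lemma cmat_add: "cmat (A + B) = cmat A + cmat B"
  by (simp add: cmat_def vec_eq_iff)
lemma cmat_diff: "cmat (A - B) = cmat A - cmat B"
  by (simp add: cmat_def vec_eq_iff)
lemma cmat_transpose: "cmat (transpose A) = transpose (cmat A)"
  by (simp add: cmat_def transpose_def vec_eq_iff)
lemma cmat_mat: "cmat (mat x) = mat (of_real x)"
  by (simp add: cmat_def mat_def vec_eq_iff)
lemma cmat_0: "cmat 0 = 0"
  by (simp add: cmat_def vec_eq_iff)
lemma cmat_inj: "cmat A = cmat B \<longleftrightarrow> A = B"
  by (simp add: cmat_def vec_eq_iff)

lemma mconj_mult: "mconj (A ** B) = mconj A ** mconj B"
  by (simp add: mconj_def matrix_matrix_mult_def vec_eq_iff)
lemma mconj_add: "mconj (A + B) = mconj A + mconj B"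
  by (simp add: mconj_def vec_eq_iff)
lemma mconj_diff: "mconj (A - B) = mconj A - mconj B"
  by (simp add: mconj_def vec_eq_iff)
lemma mconj_transpose: "mconj (transpose A) = transpose (mconj A)"
  by (simp add: mconj_def transpose_def vec_eq_iff)
lemma mconj_cmat[simp]: "mconj (cmat A) = cmat A"
  by (simp add: mconj_def cmat_def vec_eq_iff)
lemma mconj_mconj[simp]: "mconj (mconj A) = A"
  by (simp add: mconj_def vec_eq_iff)
lemma mconj_mat: "mconj (mat 1) = mat 1"
  by (simp add: mconj_def mat_def vec_eq_iff)
lemma mconj_csc: "mconj (csc c A) = csc (cnj c) (mconj A)"
  by (simp add: mconj_def csc_def vec_eq_iff)

lemma csc_mult_left: "csc c A ** B = csc c (A ** B)"
  by (simp add: csc_def matrix_matrix_mult_def vec_eq_iff sum_distrib_left mult.assoc)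
lemma csc_mult_right: "A ** csc c B = csc c (A ** B)"
  by (simp add: csc_def matrix_matrix_mult_def vec_eq_iff sum_distrib_left mult_ac)
lemma csc_transpose: "transpose (csc c A) = csc c (transpose A)"
  by (simp add: csc_def transpose_def vec_eq_iff)
lemma csc_add: "csc c (A + B) = csc c A + csc c B"
  by (simp add: csc_def vec_eq_iff algebra_simps)
lemma csc_diff: "csc c (A - B) = csc c A - csc c B"
  by (simp add: csc_def vec_eq_iff algebra_simps)
lemma csc_cancel: "c \<noteq> 0 \<Longrightarrow> csc c A = csc c B \<longleftrightarrow> A = B"
  by (simp add: csc_def vec_eq_iff)

lemma im_eq: "Z - mconj Z = csc (2 * \<i>) (cmat (mIm Z))"
  by (simp add: csc_def mconj_def cmat_def mIm_def vec_eq_iff complex_eq_iff)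

lemma trace_transpose: "trace (transpose A) = trace (A :: 'a::semiring_1^'n^'n)"
  by (simp add: trace_def transpose_def)
lemma trace_mconj: "trace (mconj A) = cnj (trace A)"
  by (simp add: trace_def mconj_def)

lemma inv_right: "invertible (A::'a::field^'n^'n) \<Longrightarrow> A ** matrix_inv A = mat 1"
  by (metis (mono_tags, lifting) invertible_def matrix_inv_def someI_ex)
lemma inv_left: "invertible (A::'a::field^'n^'n) \<Longrightarrow> matrix_inv A ** A = mat 1"
  by (metis (mono_tags, lifting) invertible_def matrix_inv_def someI_ex)

lemma inv_unique_left: "(A::'a::field^'n^'n) ** B = mat 1 \<Longrightarrow> matrix_inv A = B"
  by (metis inv_left invertible_right_inverse matrix_mul_assoc matrix_mul_lid matrix_mul_rid)

lemma mult_assoc3: "A ** (B ** C) = A ** B ** C" by (simp add: matrix_mul_assoc)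




lemma transpose_diff: "transpose (A - B) = transpose A - transpose (B::'a::ab_group_add^'n^'m)"
  by (simp add: transpose_def vec_eq_iff)
lemma transpose_add: "transpose (A + B) = transpose A + transpose (B::'a::ab_group_add^'n^'m)"
  by (simp add: transpose_def vec_eq_iff)

lemma mm_add_r: "((A::'a::semiring_1^'n^'m) + B) ** C = A ** C + B ** C"
  by (simp add: matrix_matrix_mult_def vec_eq_iff sum.distrib distrib_right)
lemma mm_diff_l: "(A::'a::ring_1^'n^'m) ** (B - C) = A ** B - A ** C"
  by (simp add: matrix_matrix_mult_def vec_eq_iff sum_subtractf right_diff_distrib)
lemma mm_diff_r: "((A::'a::ring_1^'n^'m) - B) ** C = A ** C - B ** C"
  by (simp add: matrix_matrix_mult_def vec_eq_iff sum_subtractf left_diff_distrib)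

lemma trace_cyc: "trace ((X::complex^'n^'n) ** Y) = trace (Y ** X)"
  by (rule trace_mul_sym)

lemma trace_cyc2: "trace ((X::complex^'m^'n) ** Y) = trace (Y ** X)"
  by (rule trace_mul_sym)

lemma eta_form:
  fixes Q :: "complex^'n^'n" and V dW :: "complex^'n^'m"
  assumes dZ: "transpose dZ = dZ" and Qt: "transpose Q = Q"
    and Qc: "mconj Q = Q" and Vc: "mconj V = V"
  shows "trace (Q ** transpose V ** V ** Q ** dZ ** Q ** mconj dZ)
           + trace (Q ** transpose dW ** mconj dW)
           - trace (V ** Q ** dZ ** Q ** transpose (mconj dW))
           - trace (V ** Q ** mconj dZ ** Q ** transpose dW)
       = trace (Q ** transpose (dW - V ** Q ** dZ) ** mconj (dW - V ** Q ** dZ))"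
proof -
  have tdZc: "transpose (mconj dZ) = mconj dZ" by (metis dZ mconj_transpose)
  have e1: "transpose (dW - V ** Q ** dZ) = transpose dW - dZ ** Q ** transpose V"
    by (simp add: transpose_diff matrix_transpose_mul dZ Qt matrix_mul_assoc)
  have e2: "mconj (dW - V ** Q ** dZ) = mconj dW - V ** Q ** mconj dZ"
    by (simp add: mconj_diff mconj_mult Qc Vc)
  have "Q ** (transpose dW - dZ ** Q ** transpose V) ** (mconj dW - V ** Q ** mconj dZ)
     = Q ** transpose dW ** mconj dW - Q ** transpose dW ** V ** Q ** mconj dZ
       - Q ** dZ ** Q ** transpose V ** mconj dW + Q ** dZ ** Q ** transpose V ** V ** Q ** mconj dZ"
    by (simp add: mm_diff_l mm_diff_r matrix_mul_assoc algebra_simps)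
  then have R: "trace (Q ** transpose (dW - V ** Q ** dZ) ** mconj (dW - V ** Q ** dZ))
     = trace (Q ** transpose dW ** mconj dW) - trace (Q ** transpose dW ** V ** Q ** mconj dZ)
       - trace (Q ** dZ ** Q ** transpose V ** mconj dW) + trace (Q ** dZ ** Q ** transpose V ** V ** Q ** mconj dZ)"
    by (simp add: e1 e2 trace_add trace_sub)
  have t2: "trace (Q ** transpose dW ** V ** Q ** mconj dZ) = trace (V ** Q ** mconj dZ ** Q ** transpose dW)"
    using trace_cyc2[of "Q ** transpose dW" "V ** Q ** mconj dZ"] by (simp add: matrix_mul_assoc)
  have t3: "trace (Q ** dZ ** Q ** transpose V ** mconj dW) = trace (V ** Q ** dZ ** Q ** transpose (mconj dW))"
  proof -
    have "trace (Q ** dZ ** Q ** transpose V ** mconj dW) = trace (transpose (Q ** dZ ** Q ** transpose V ** mconj dW))"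
      by (simp add: trace_transpose)
    also have "\<dots> = trace (transpose (mconj dW) ** V ** Q ** dZ ** Q)"
      by (simp add: matrix_transpose_mul dZ Qt matrix_mul_assoc)
    also have "\<dots> = trace (V ** Q ** dZ ** Q ** transpose (mconj dW))"
      using trace_cyc2[of "transpose (mconj dW)" "V ** Q ** dZ ** Q"] by (simp add: matrix_mul_assoc)
    finally show ?thesis .
  qed
  have t4: "trace (Q ** dZ ** Q ** transpose V ** V ** Q ** mconj dZ) = trace (Q ** transpose V ** V ** Q ** dZ ** Q ** mconj dZ)"
  proof -
    have "trace (Q ** dZ ** Q ** transpose V ** V ** Q ** mconj dZ) = trace (Q ** transpose V ** V ** Q ** mconj dZ ** Q ** dZ)"
      using trace_cyc[of "Q ** dZ" "Q ** transpose V ** V ** Q ** mconj dZ"] by (simp add: matrix_mul_assoc)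
    also have "\<dots> = trace (transpose (Q ** transpose V ** V ** Q ** mconj dZ ** Q ** dZ))"
      by (simp add: trace_transpose)
    also have "\<dots> = trace (dZ ** Q ** mconj dZ ** Q ** transpose V ** V ** Q)"
      by (simp add: matrix_transpose_mul dZ Qt tdZc matrix_mul_assoc)
    also have "\<dots> = trace (Q ** transpose V ** V ** Q ** dZ ** Q ** mconj dZ)"
      using trace_cyc[of "dZ ** Q ** mconj dZ" "Q ** transpose V ** V ** Q"] by (simp add: matrix_mul_assoc)
    finally show ?thesis .
  qed
  show ?thesis using R t2 t3 t4 by simp
qed


section \<open>PSD decomposition\<close>

definition psd :: "real^'n^'n \<Rightarrow> bool" where
  "psd Q \<longleftrightarrow> (\<forall>x. 0 \<le> x \<bullet> (Q *v x))"

definition NZ :: "real^'n^'n \<Rightarrow> 'n set" where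
  "NZ Q = {i. \<exists>j. Q$i$j \<noteq> 0}"

lemma sym_entry: "transpose Q = Q \<Longrightarrow> Q$i$j = Q$j$i"
  by (metis transpose_def vec_lambda_beta)

lemma inner_sym:
  fixes Q :: "real^'n^'n"
  assumes "transpose Q = Q"
  shows "x \<bullet> (Q *v y) = y \<bullet> (Q *v x)"
proof -
  have "x \<bullet> (Q *v y) = (\<Sum>i\<in>UNIV. \<Sum>j\<in>UNIV. x$i * Q$i$j * y$j)"
    by (simp add: inner_vec_def matrix_vector_mult_def sum_distrib_left mult.assoc)
  also have "\<dots> = (\<Sum>j\<in>UNIV. \<Sum>i\<in>UNIV. x$i * Q$i$j * y$j)" by (rule sum.swap)
  also have "\<dots> = (\<Sum>j\<in>UNIV. \<Sum>i\<in>UNIV. y$j * Q$j$i * x$i)"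
    using sym_entry[OF assms] by (simp add: mult_ac)
  also have "\<dots> = y \<bullet> (Q *v x)"
    by (simp add: inner_vec_def matrix_vector_mult_def sum_distrib_left mult.assoc)
  finally show ?thesis .
qed

lemma quad_expand:
  fixes Q :: "real^'n^'n"
  assumes "transpose Q = Q"
  shows "(x + t *\<^sub>R e) \<bullet> (Q *v (x + t *\<^sub>R e))
     = x \<bullet> (Q *v x) + 2 * t * (e \<bullet> (Q *v x)) + t^2 * (e \<bullet> (Q *v e))"
  using inner_sym[OF assms, of x e]
  by (simp add: matrix_vector_right_distrib matrix_vector_mult_scaleR inner_add_left inner_add_right
      algebra_simps power2_eq_square)

lemma axis_inner_mv: "axis i 1 \<bullet> (Q *v x) = (Q *v x)$i"
  by (simp add: inner_axis' )

lemma mv_axis: "(Q *v axis j (1::real)) $ i = Q$i$j"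
  by (simp add: matrix_vector_mult_def axis_def if_distrib cong: if_cong)

lemma psd_diag_zero:
  fixes Q :: "real^'n^'n"
  assumes sym: "transpose Q = Q" and p: "psd Q" and c: "Q$i$i = 0"
  shows "Q$i$j = 0"
proof (rule ccontr)
  assume b0: "Q$i$j \<noteq> 0"
  let ?e = "axis i (1::real)" and ?x = "axis j (1::real)"
  define b where "b = ?e \<bullet> (Q *v ?x)"
  have bq: "b = Q$i$j" unfolding b_def axis_inner_mv mv_axis ..
  have ee: "?e \<bullet> (Q *v ?e) = 0" using c by (simp add: axis_inner_mv mv_axis)
  define t where "t = - (?x \<bullet> (Q *v ?x) + 1) / (2 * b)"
  have "0 \<le> (?x + t *\<^sub>R ?e) \<bullet> (Q *v (?x + t *\<^sub>R ?e))" using p psd_def by blast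
  also have "\<dots> = ?x \<bullet> (Q *v ?x) + 2 * t * b" unfolding quad_expand[OF sym] ee b_def by simp
  also have "\<dots> = -1" using b0 bq by (simp add: t_def field_simps)
  finally show False by simp
qed

lemma smv: "((k::real) *\<^sub>R (M::real^'n^'m)) *v x = k *\<^sub>R (M *v x)"
  by (simp add: matrix_vector_mult_def vec_eq_iff sum_distrib_left mult.assoc)

definition outer :: "real^'n \<Rightarrow> real^'n^'n" where
  "outer q = (\<chi> a b. q$a * q$b)"

lemma outer_quad: "x \<bullet> (outer q *v x) = (q \<bullet> x)^2"
proof -
  have "x \<bullet> (outer q *v x) = (\<Sum>a\<in>UNIV. \<Sum>b\<in>UNIV. (x$a * q$a) * (q$b * x$b))"
    by (simp add: inner_vec_def matrix_vector_mult_def outer_def sum_distrib_left mult_ac)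
  also have "\<dots> = (\<Sum>a\<in>UNIV. x$a * q$a) * (\<Sum>b\<in>UNIV. q$b * x$b)"
    by (simp add: sum_product)
  also have "\<dots> = (q \<bullet> x)^2" by (simp add: inner_vec_def power2_eq_square mult.commute)
  finally show ?thesis .
qed

lemma tLL_entry: "(transpose (L::'a::comm_semiring_1^'n^'k) ** L) $ a $ b = (\<Sum>k\<in>UNIV. L$k$a * L$k$b)"
  by (simp add: matrix_matrix_mult_def transpose_def)

lemma psd_decomp_aux:
  fixes Q :: "real^'n^'n"
  shows "transpose Q = Q \<Longrightarrow> psd Q \<Longrightarrow>
     \<exists>L. Q = transpose L ** L \<and> (\<forall>k. k \<notin> NZ Q \<longrightarrow> L$k = 0)"
proof (induct "card (NZ Q)" arbitrary: Q rule: less_induct)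
  case less
  note sym = less.prems(1) and p = less.prems(2)
  show ?case
  proof (cases "NZ Q = {}")
    case True
    then have "Q = 0" by (auto simp: NZ_def vec_eq_iff)
    then show ?thesis by (intro exI[of _ 0]) (simp add: vec_eq_iff matrix_matrix_mult_def)
  next
    case False
    then obtain i where iN: "i \<in> NZ Q" by blast
    define c where "c = Q$i$i"
    let ?e = "axis i (1::real)"
    have c0: "c \<ge> 0" using p unfolding psd_def c_def
      by (metis axis_inner_mv mv_axis)
    have "c \<noteq> 0" using psd_diag_zero[OF sym p] iN by (auto simp: NZ_def c_def)
    with c0 have cpos: "c > 0" by simp
    define q where "q = (\<chi> j. Q$i$j)"
    define Q' where "Q' = Q - (1/c) *\<^sub>R outer q"
    have sym': "transpose Q' = Q'"
      using sym_entry[OF sym] by (simp add: Q'_def vec_eq_iff transpose_def outer_def mult.commute)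
    have qx: "q \<bullet> x = ?e \<bullet> (Q *v x)" for x
      unfolding axis_inner_mv by (simp add: q_def inner_vec_def matrix_vector_mult_def)
    have p': "psd Q'" unfolding psd_def
    proof
      fix x
      define b where "b = ?e \<bullet> (Q *v x)"
      define t where "t = - b / c"
      have "0 \<le> (x + t *\<^sub>R ?e) \<bullet> (Q *v (x + t *\<^sub>R ?e))" using p psd_def by blast
      also have "\<dots> = x \<bullet> (Q *v x) + 2 * t * b + t^2 * c"
        unfolding quad_expand[OF sym] b_def by (simp add: c_def axis_inner_mv mv_axis)
      also have "\<dots> = x \<bullet> (Q *v x) - b^2 / c" using cpos by (simp add: t_def field_simps power2_eq_square)
      also have "\<dots> = x \<bullet> (Q' *v x)"
        by (simp add: Q'_def matrix_vector_mult_diff_rdistrib inner_diff_right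
            smv outer_quad qx b_def)
      finally show "0 \<le> x \<bullet> (Q' *v x)" .
    qed
    have sub: "NZ Q' \<subseteq> NZ Q - {i}"
    proof
      fix k assume k: "k \<in> NZ Q'"
      then obtain j where j: "Q'$k$j \<noteq> 0" by (auto simp: NZ_def)
      have Q'e: "Q'$k$j = Q$k$j - q$k * q$j / c" by (simp add: Q'_def outer_def)
      have "k \<noteq> i"
      proof
        assume "k = i"
        then have "Q'$k$j = 0" using cpos Q'e by (simp add: q_def c_def)
        then show False using j by simp
      qed
      moreover have "k \<in> NZ Q"
      proof (rule ccontr)
        assume "k \<notin> NZ Q"
        then have "\<forall>j. Q$k$j = 0" by (auto simp: NZ_def)
        then have "q$k = 0" using sym_entry[OF sym, of i k] by (simp add: q_def)
        then show False using j Q'e \<open>\<forall>j. Q$k$j = 0\<close> by simp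
      qed
      ultimately show "k \<in> NZ Q - {i}" by simp
    qed
    have "card (NZ Q') < card (NZ Q)"
    proof (rule psubset_card_mono)
      show "NZ Q' \<subset> NZ Q" using sub iN by blast
    qed simp
    from less.hyps[OF this sym' p'] obtain L' where
      L': "Q' = transpose L' ** L'" "\<forall>k. k \<notin> NZ Q' \<longrightarrow> L'$k = 0" by blast
    have L'i: "L'$i = 0" using L'(2) sub by blast
    define v where "v = sqrt (1/c) *\<^sub>R q"
    define L where "L = (\<chi> k. if k = i then v else L'$k)"
    have "transpose L ** L = Q"
    proof -
      have "(transpose L ** L)$a$b = Q$a$b" for a b
      proof -
        have "(transpose L ** L)$a$b = (\<Sum>k\<in>UNIV. (if k = i then v$a * v$b else L'$k$a * L'$k$b))"
          unfolding tLL_entry by (rule sum.cong) (simp_all add: L_def)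
        also have "\<dots> = (\<Sum>k\<in>UNIV. L'$k$a * L'$k$b) + v$a * v$b"
        proof -
          have "(\<lambda>k. (if k = i then v$a * v$b else L'$k$a * L'$k$b))
               = (\<lambda>k. L'$k$a * L'$k$b + (if k = i then v$a * v$b else 0))"
            using L'i by (auto simp: fun_eq_iff)
          then show ?thesis by (simp only:) (simp add: sum.distrib)
        qed
        also have "\<dots> = Q'$a$b + (1/c) * (q$a * q$b)"
        proof -
          have ss: "sqrt (1/c) * sqrt (1/c) = 1/c" using cpos by simp
          have "v$a * v$b = (sqrt (1/c) * sqrt (1/c)) * (q$a * q$b)" by (simp only: v_def vector_scaleR_component real_scaleR_def mult_ac)
          then show ?thesis unfolding ss by (simp add: L'(1) tLL_entry)
        qed
        also have "\<dots> = Q$a$b" by (simp add: Q'_def outer_def)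
        finally show ?thesis .
      qed
      then show ?thesis by (simp add: vec_eq_iff)
    qed
    moreover have "\<forall>k. k \<notin> NZ Q \<longrightarrow> L$k = 0"
      using L'(2) sub iN by (auto simp: L_def)
    ultimately show ?thesis by metis
  qed
qed


lemma psd_decomp:
  fixes Q :: "real^'n^'n"
  assumes "transpose Q = Q" "psd Q"
  shows "\<exists>L::real^'n^'n. Q = transpose L ** L"
  using psd_decomp_aux[OF assms] by blast

lemma posdef_inj:
  fixes Y :: "real^'n^'n"
  assumes "posdef Y" "Y *v x = 0" shows "x = 0"
  using assms unfolding posdef_def by (metis inner_zero_right less_irrefl)

lemma posdef_invertible:
  fixes Y :: "real^'n^'n"
  assumes "posdef Y" shows "invertible Y"
proof -
  have "inj ((*v) Y)"
  proof (rule injI)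
    fix x y assume "Y *v x = Y *v y"
    then have "Y *v (x - y) = 0" by (simp add: matrix_vector_mult_diff_distrib)
    then have "x - y = 0" using posdef_inj[OF assms] by blast
    then show "x = y" by simp
  qed
  then show ?thesis
    using det_nz_iff_inj[of "(*v) Y"] invertible_det_nz[of Y]
    by (simp add: matrix_of_matrix_vector_mul)
qed

lemma inv_sym:
  fixes Y :: "'a::field^'n^'n"
  assumes "invertible Y" "transpose Y = Y"
  shows "transpose (matrix_inv Y) = matrix_inv Y"
proof -
  have "transpose (matrix_inv Y) ** Y = mat 1"
    using inv_right[OF assms(1)] by (metis assms(2) matrix_transpose_mul transpose_mat)
  then have "transpose (matrix_inv Y) = transpose (matrix_inv Y) ** (Y ** matrix_inv Y)"
    using inv_right[OF assms(1)] by simp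
  also have "\<dots> = matrix_inv Y" using \<open>transpose (matrix_inv Y) ** Y = mat 1\<close>
    by (simp add: matrix_mul_assoc)
  finally show ?thesis .
qed

lemma posdef_inv_psd:
  fixes Y :: "real^'n^'n"
  assumes "posdef Y"
  shows "psd (matrix_inv Y)"
  unfolding psd_def
proof
  fix x
  let ?Q = "matrix_inv Y"
  have "Y *v (?Q *v x) = x"
    using inv_right[OF posdef_invertible[OF assms]] by (simp add: matrix_vector_mul_assoc)
  then have "x \<bullet> (?Q *v x) = (?Q *v x) \<bullet> (Y *v (?Q *v x))"
    by (metis inner_commute)
  moreover have "0 \<le> (?Q *v x) \<bullet> (Y *v (?Q *v x))"
    using assms unfolding posdef_def by (metis inner_zero_left order.strict_implies_order order_refl)
  ultimately show "0 \<le> x \<bullet> (?Q *v x)" by simp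
qed

lemma posdef_sym: "posdef Y \<Longrightarrow> transpose Y = Y"
  by (simp add: posdef_def symmetric_mat_def)

lemma mult_cnj_sq: "z * cnj z = (complex_of_real (cmod z))^2"
  by (metis complex_norm_square of_real_power)

lemma sumsq:
  fixes H :: "complex^'n^'m"
  shows "trace (transpose H ** mconj H) = of_real (\<Sum>a\<in>UNIV. \<Sum>k\<in>UNIV. (cmod (H$k$a))^2)"
  by (simp add: trace_def matrix_matrix_mult_def transpose_def mconj_def mult_cnj_sq)

lemma sumsq_zero:
  fixes H :: "complex^'n^'m"
  assumes "(\<Sum>a\<in>UNIV. \<Sum>k\<in>UNIV. (cmod (H$k$a))^2) = 0"
  shows "H = 0"
proof -
  have "\<forall>a. (\<Sum>k\<in>UNIV. (cmod (H$k$a))^2) = 0"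
    using assms by (simp add: sum_nonneg_eq_0_iff sum_nonneg)
  then have "\<forall>a k. (cmod (H$k$a))^2 = 0"
    by (simp add: sum_nonneg_eq_0_iff)
  then show ?thesis by (simp add: vec_eq_iff)
qed

lemma sumsq_nonneg: "0 \<le> (\<Sum>a\<in>UNIV. \<Sum>k\<in>UNIV. (cmod ((H::complex^'n^'m)$k$a))^2)"
  by (simp add: sum_nonneg)




lemma cmat_inv_l: "posdef Y \<Longrightarrow> cmat (matrix_inv Y) ** cmat Y = mat 1"
  by (metis cmat_mult cmat_mat inv_left of_real_1 posdef_invertible)
lemma cmat_inv_r: "posdef Y \<Longrightarrow> cmat Y ** cmat (matrix_inv Y) = mat 1"
  by (metis cmat_mult cmat_mat inv_right of_real_1 posdef_invertible)

lemma matrix_mul_lzero[simp]: "(0::'a::semiring_1^'n^'m) ** A = 0"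
  by (simp add: matrix_matrix_mult_def vec_eq_iff)
lemma matrix_mul_rzero[simp]: "A ** (0::'a::semiring_1^'n^'m) = 0"
  by (simp add: matrix_matrix_mult_def vec_eq_iff)

lemma T1_pos:
  fixes Y :: "real^'n^'n" and dZ :: "complex^'n^'n"
  assumes Y: "posdef Y" and dZ: "transpose dZ = dZ"
  shows "\<exists>s. trace (cmat (matrix_inv Y) ** dZ ** cmat (matrix_inv Y) ** mconj dZ) = of_real s
            \<and> s \<ge> 0 \<and> (s = 0 \<longrightarrow> dZ = 0)"
proof -
  let ?Q = "cmat (matrix_inv Y)"
  obtain L :: "real^'n^'n" where L: "matrix_inv Y = transpose L ** L"
    using psd_decomp[OF inv_sym[OF posdef_invertible[OF Y] posdef_sym[OF Y]] posdef_inv_psd[OF Y]] by blast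
  define cL where "cL = cmat L"
  have Q: "?Q = transpose cL ** cL" by (simp add: L cmat_mult cmat_transpose cL_def)
  define G where "G = cL ** dZ ** transpose cL"
  have Gt: "transpose G = G" by (simp add: G_def matrix_transpose_mul dZ matrix_mul_assoc)
  have Gc: "mconj G = cL ** mconj dZ ** transpose cL"
    by (simp add: G_def mconj_mult mconj_transpose cL_def)
  have "trace (?Q ** dZ ** ?Q ** mconj dZ) = trace (transpose cL ** (cL ** dZ ** transpose cL ** cL ** mconj dZ))"
    by (simp add: Q matrix_mul_assoc)
  also have "\<dots> = trace (cL ** dZ ** transpose cL ** cL ** mconj dZ ** transpose cL)"
    by (subst trace_cyc) (simp add: matrix_mul_assoc)
  also have "\<dots> = trace (transpose G ** mconj G)"
    by (simp only: Gt Gc) (simp add: G_def matrix_mul_assoc)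
  finally have e: "trace (?Q ** dZ ** ?Q ** mconj dZ) = of_real (\<Sum>a\<in>UNIV. \<Sum>k\<in>UNIV. (cmod (G$k$a))^2)"
    by (simp add: sumsq)
  have z: "dZ = 0" if "(\<Sum>a\<in>UNIV. \<Sum>k\<in>UNIV. (cmod (G$k$a))^2) = 0"
  proof -
    have G0: "G = 0" using sumsq_zero that by blast
    have "?Q ** dZ ** ?Q = transpose cL ** G ** cL" by (simp add: Q G_def matrix_mul_assoc)
    then have "?Q ** dZ ** ?Q = 0" by (simp add: G0 matrix_mul_lzero matrix_mul_rzero)
    then have "cmat Y ** (?Q ** dZ ** ?Q) ** cmat Y = 0" by (simp add: matrix_mul_lzero matrix_mul_rzero)
    moreover have "cmat Y ** (?Q ** dZ ** ?Q) ** cmat Y = (cmat Y ** ?Q) ** dZ ** (?Q ** cmat Y)"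
      by (simp add: matrix_mul_assoc)
    ultimately show ?thesis using cmat_inv_l[OF Y] cmat_inv_r[OF Y] by simp
  qed
  show ?thesis using e z sumsq_nonneg by blast
qed

lemma T2_pos:
  fixes Y :: "real^'n^'n" and E :: "complex^'n^'m"
  assumes Y: "posdef Y"
  shows "\<exists>s. trace (cmat (matrix_inv Y) ** transpose E ** mconj E) = of_real s
            \<and> s \<ge> 0 \<and> (s = 0 \<longrightarrow> E = 0)"
proof -
  let ?Q = "cmat (matrix_inv Y)"
  obtain L :: "real^'n^'n" where L: "matrix_inv Y = transpose L ** L"
    using psd_decomp[OF inv_sym[OF posdef_invertible[OF Y] posdef_sym[OF Y]] posdef_inv_psd[OF Y]] by blast
  define cL where "cL = cmat L"
  have Q: "?Q = transpose cL ** cL" by (simp add: L cmat_mult cmat_transpose cL_def)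
  define H where "H = E ** transpose cL"
  have Ht: "transpose H = cL ** transpose E" by (simp add: H_def matrix_transpose_mul)
  have Hc: "mconj H = mconj E ** transpose cL"
    by (simp add: H_def mconj_mult mconj_transpose cL_def)
  have "trace (?Q ** transpose E ** mconj E) = trace (transpose cL ** (cL ** transpose E ** mconj E))"
    by (simp add: Q matrix_mul_assoc)
  also have "\<dots> = trace (cL ** transpose E ** mconj E ** transpose cL)"
    by (subst trace_cyc) (simp add: matrix_mul_assoc)
  also have "\<dots> = trace (transpose H ** mconj H)"
    by (simp add: Ht Hc matrix_mul_assoc)
  finally have e: "trace (?Q ** transpose E ** mconj E) = of_real (\<Sum>a\<in>UNIV. \<Sum>k\<in>UNIV. (cmod (H$k$a))^2)"
    by (simp add: sumsq)
  have z: "E = 0" if "(\<Sum>a\<in>UNIV. \<Sum>k\<in>UNIV. (cmod (H$k$a))^2) = 0"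
  proof -
    have H0: "H = 0" using sumsq_zero that by blast
    have "E ** ?Q = H ** cL" by (simp add: Q H_def matrix_mul_assoc)
    then have "E ** ?Q ** cmat Y = 0" by (simp add: H0 matrix_mul_lzero)
    then show ?thesis using cmat_inv_l[OF Y] by (simp add: matrix_mul_assoc[symmetric])
  qed
  show ?thesis using e z sumsq_nonneg by blast
qed


lemma ds2_eq:
  fixes Z dZ :: "complex^'n^'n" and W dW :: "complex^'n^'m"
  assumes Y: "posdef (mIm Z)" and dZ: "transpose dZ = dZ"
  shows "ds2 a b (Z, W) (dZ, dW) =
     of_real a * trace (cmat (matrix_inv (mIm Z)) ** dZ ** cmat (matrix_inv (mIm Z)) ** mconj dZ)
   + of_real b * trace (cmat (matrix_inv (mIm Z)) ** transpose (dW - cmat (mIm W) ** cmat (matrix_inv (mIm Z)) ** dZ)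
        ** mconj (dW - cmat (mIm W) ** cmat (matrix_inv (mIm Z)) ** dZ))"
proof -
  have Qt: "transpose (cmat (matrix_inv (mIm Z))) = cmat (matrix_inv (mIm Z))"
    by (simp add: cmat_transpose[symmetric] inv_sym[OF posdef_invertible[OF Y] posdef_sym[OF Y]])
  show ?thesis
    unfolding ds2_def Let_def fst_conv snd_conv
    using eta_form[OF dZ Qt, of "cmat (mIm W)" dW] by simp
qed

lemma part1:
  fixes p :: "(complex^'n^'n) \<times> (complex^'n^'m)" and v :: "(complex^'n^'n) \<times> (complex^'n^'m)"
  assumes a: "a > 0" and b: "b > 0" and p: "p \<in> siegel_jacobi" and v: "symmetric_mat (fst v)"
  shows "Im (ds2 a b p v) = 0 \<and> (v \<noteq> 0 \<longrightarrow> Re (ds2 a b p v) > 0)"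
proof -
  obtain Z W where pZW: "p = (Z, W)" by (cases p)
  obtain dZ dW where vZW: "v = (dZ, dW)" by (cases v)
  have Y: "posdef (mIm Z)" using p by (simp add: pZW siegel_jacobi_def siegel_H_def)
  have dZ: "transpose dZ = dZ" using v by (simp add: vZW symmetric_mat_def)
  define E where "E = dW - cmat (mIm W) ** cmat (matrix_inv (mIm Z)) ** dZ"
  obtain s1 where s1: "trace (cmat (matrix_inv (mIm Z)) ** dZ ** cmat (matrix_inv (mIm Z)) ** mconj dZ) = of_real s1"
     "s1 \<ge> 0" "s1 = 0 \<longrightarrow> dZ = 0"
    using T1_pos[OF Y dZ] by blast
  obtain s2 where s2: "trace (cmat (matrix_inv (mIm Z)) ** transpose E ** mconj E) = of_real s2"
     "s2 \<ge> 0" "s2 = 0 \<longrightarrow> E = 0"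
    using T2_pos[OF Y] by blast
  have d: "ds2 a b p v = of_real (a * s1 + b * s2)"
    unfolding pZW vZW ds2_eq[OF Y dZ] using s1(1) s2(1) by (simp add: E_def)
  have "v \<noteq> 0 \<longrightarrow> a * s1 + b * s2 > 0"
  proof
    assume "v \<noteq> 0"
    show "a * s1 + b * s2 > 0"
    proof (cases "s1 = 0")
      case True
      then have "dZ = 0" using s1 by simp
      then have "dW \<noteq> 0" using \<open>v \<noteq> 0\<close> by (simp add: vZW zero_prod_def)
      then have "E \<noteq> 0" using \<open>dZ = 0\<close> by (simp add: E_def)
      then have "s2 > 0" using s2 by fastforce
      then show ?thesis using a b s1 by (simp add: add_nonneg_pos)
    next
      case False
      then have "s1 > 0" using s1 by simp
      then show ?thesis using a b s2 by (simp add: add_pos_nonneg)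
    qed
  qed
  then show ?thesis unfolding d by simp
qed




lemma norm_vec_le_sum: "norm (x::'a::real_normed_vector^'n) \<le> (\<Sum>i\<in>UNIV. norm (x$i))"
  unfolding norm_vec_def by (rule L2_set_le_sum) simp

lemma bb_mm: "bounded_bilinear ((**) :: complex^'k^'m \<Rightarrow> complex^'n^'k \<Rightarrow> complex^'n^'m)"
proof
  fix a a' :: "complex^'k^'m" and b b' :: "complex^'n^'k" and r :: real
  show "(a + a') ** b = a ** b + a' ** b" by (rule mm_add_r)
  show "a ** (b + b') = a ** b + a ** b'" by (rule matrix_add_ldistrib)
  show "(r *\<^sub>R a) ** b = r *\<^sub>R (a ** b)"
    unfolding vec_eq_iff matrix_matrix_mult_def by (auto simp: scaleR_sum_right)
  show "a ** (r *\<^sub>R b) = r *\<^sub>R (a ** b)"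
    unfolding vec_eq_iff matrix_matrix_mult_def by (auto simp: scaleR_sum_right)
next
  show "\<exists>K. \<forall>(a::complex^'k^'m) (b::complex^'n^'k). norm (a ** b) \<le> norm a * norm b * K"
  proof (intro exI allI)
    fix a :: "complex^'k^'m" and b :: "complex^'n^'k"
    have e: "norm ((a ** b)$i$j) \<le> of_nat CARD('k) * (norm a * norm b)" for i j
    proof -
      have "norm ((a ** b)$i$j) = norm (\<Sum>k\<in>UNIV. a$i$k * b$k$j)"
        by (simp add: matrix_matrix_mult_def)
      also have "\<dots> \<le> (\<Sum>k\<in>UNIV. norm (a$i$k * b$k$j))" by (rule norm_sum)
      also have "\<dots> \<le> (\<Sum>k\<in>(UNIV::'k set). norm a * norm b)"
      proof (rule sum_mono)
        fix k
        have "norm (a$i$k) \<le> norm a" using Finite_Cartesian_Product.norm_nth_le[where x="a$i" and i=k] Finite_Cartesian_Product.norm_nth_le[where x=a and i=i] by linarith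
        moreover have "norm (b$k$j) \<le> norm b" using Finite_Cartesian_Product.norm_nth_le[where x="b$k" and i=j] Finite_Cartesian_Product.norm_nth_le[where x=b and i=k] by linarith
        ultimately show "norm (a$i$k * b$k$j) \<le> norm a * norm b"
          by (simp add: norm_mult mult_mono')
      qed
      finally show ?thesis by simp
    qed
    have "norm (a ** b) \<le> (\<Sum>i\<in>UNIV. norm ((a ** b)$i))" by (rule norm_vec_le_sum)
    also have "\<dots> \<le> (\<Sum>i\<in>UNIV. \<Sum>j\<in>UNIV. norm ((a ** b)$i$j))"
      by (rule sum_mono) (rule norm_vec_le_sum)
    also have "\<dots> \<le> (\<Sum>i\<in>(UNIV::'m set). \<Sum>j\<in>(UNIV::'n set). of_nat CARD('k) * (norm a * norm b))"
      by (intro sum_mono e)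
    also have "\<dots> = norm a * norm b * (of_nat CARD('m) * of_nat CARD('n) * of_nat CARD('k))"
      by (simp add: mult_ac)
    finally show "norm (a ** b) \<le> norm a * norm b * (of_nat CARD('m) * of_nat CARD('n) * of_nat CARD('k))" .
  qed
qed

lemmas mm_FDERIV = bounded_bilinear.FDERIV[OF bb_mm]

lemma differentiable_prod':
  fixes f :: "'i \<Rightarrow> 'a::real_normed_vector \<Rightarrow> 'b::real_normed_field"
  assumes "\<And>i. i \<in> I \<Longrightarrow> f i differentiable (at x)"
  shows "(\<lambda>x. \<Prod>i\<in>I. f i x) differentiable (at x)"
proof -
  have "\<forall>i\<in>I. \<exists>D. (f i has_derivative D) (at x)" using assms unfolding differentiable_def by blast
  from bchoice[OF this] obtain f' where f': "\<forall>i\<in>I. (f i has_derivative f' i) (at x)" by blast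
  have "((\<lambda>x. \<Prod>i\<in>I. f i x) has_derivative (\<lambda>y. \<Sum>i\<in>I. f' i y * (\<Prod>j\<in>I-{i}. f j x))) (at x)"
    by (rule has_derivative_prod) (use f' in blast)
  then show ?thesis unfolding differentiable_def by blast
qed

lemma det_differentiable:
  fixes F :: "'a::real_normed_vector \<Rightarrow> complex^'n^'n"
  assumes "\<And>i j. (\<lambda>x. F x $ i $ j) differentiable (at x0)"
  shows "(\<lambda>x. det (F x)) differentiable (at x0)"
  unfolding det_def
proof (rule differentiable_sum)
  show "\<forall>p\<in>{p. p permutes UNIV}. (\<lambda>x. of_int (sign p) * (\<Prod>i\<in>UNIV. F x $ i $ p i)) differentiable (at x0)"
  proof
    fix p :: "'n \<Rightarrow> 'n"
    have "(\<lambda>x. \<Prod>i\<in>UNIV. F x $ i $ p i) differentiable (at x0)"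
      by (rule differentiable_prod') (rule assms)
    then show "(\<lambda>x. of_int (sign p) * (\<Prod>i\<in>UNIV. F x $ i $ p i)) differentiable (at x0)"
      by (rule differentiable_mult[OF differentiable_const])
  qed
qed simp

lemma mv_axis_gen: "(Q *v axis j (1::'a::semiring_1)) $ i = Q$i$j"
  by (simp add: matrix_vector_mult_def axis_def if_distrib cong: if_cong)

lemma inv_cramer:
  fixes P :: "'a::field^'n^'n"
  assumes d: "det P \<noteq> 0"
  shows "matrix_inv P $ k $ j = det (\<chi> a b. if b = k then (if a = j then 1 else 0) else P$a$b) / det P"
proof -
  have inv: "invertible P" using d invertible_det_nz by blast
  have ax: "\<And>i. axis j (1::'a) $ i = (if i = j then 1 else 0)" by (simp add: axis_def)
  have "P *v (matrix_inv P *v axis j 1) = axis j 1"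
    using inv_right[OF inv] by (simp add: matrix_vector_mul_assoc)
  then have "matrix_inv P *v axis j 1 = (\<chi> k. det(\<chi> i b. if b=k then axis j 1 $ i else P$i$b) / det P)"
    using cramer[OF d, of "matrix_inv P *v axis j 1" "axis j 1"] by (simp only:)
  then have "(matrix_inv P *v axis j 1) $ k = det(\<chi> i b. if b=k then axis j 1 $ i else P$i$b) / det P"
    by simp
  then show ?thesis unfolding mv_axis_gen ax .
qed

lemma bounded_linear_axis: "bounded_linear (axis i :: 'a::real_normed_vector \<Rightarrow> 'a^'n)"
proof
  fix a b :: 'a and r :: real
  show "axis i (a + b) = (axis i a + axis i b :: 'a^'n)" by (simp add: axis_def vec_eq_iff)
  show "axis i (r *\<^sub>R a) = (r *\<^sub>R axis i a :: 'a^'n)" by (simp add: axis_def vec_eq_iff)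
next
  show "\<exists>K. \<forall>a. norm (axis i a :: 'a^'n) \<le> norm a * K"
  proof (intro exI allI)
    fix a :: 'a
    have "norm (axis i a :: 'a^'n) \<le> (\<Sum>j\<in>UNIV. norm ((axis i a :: 'a^'n)$j))" by (rule norm_vec_le_sum)
    also have "\<dots> = norm a" by (simp add: axis_def if_distrib cong: if_cong)
    finally show "norm (axis i a :: 'a^'n) \<le> norm a * 1" by simp
  qed
qed

lemma vec_differentiable:
  fixes f :: "'a::real_normed_vector \<Rightarrow> 'b::real_normed_vector^'n"
  assumes "\<And>i. (\<lambda>x. f x $ i) differentiable (at x0)"
  shows "f differentiable (at x0)"
proof -
  have "\<forall>i. \<exists>D. ((\<lambda>x. f x $ i) has_derivative D) (at x0)" using assms unfolding differentiable_def by blast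
  from choice[OF this] obtain f' where f': "\<And>i. ((\<lambda>x. f x $ i) has_derivative f' i) (at x0)" by blast
  have "((\<lambda>x. \<Sum>i\<in>UNIV. axis i (f x $ i)) has_derivative (\<lambda>h. \<Sum>i\<in>UNIV. axis i (f' i h))) (at x0)"
    by (intro has_derivative_sum bounded_linear.has_derivative[OF bounded_linear_axis] f')
  moreover have "(\<lambda>x. \<Sum>i\<in>UNIV. axis i (f x $ i)) = f"
    by (simp add: fun_eq_iff vec_eq_iff axis_def if_distrib cong: if_cong)
  ultimately show ?thesis unfolding differentiable_def by metis
qed

lemma bl_entry: "bounded_linear (\<lambda>M::'a::real_normed_vector^'n^'m. M $ i $ j)"
  by (rule bounded_linear_compose[OF bounded_linear_vec_nth bounded_linear_vec_nth])

lemma entry_differentiable: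
  fixes F :: "'a::real_normed_vector \<Rightarrow> 'b::real_normed_vector^'n^'m"
  assumes "F differentiable (at x0)"
  shows "(\<lambda>x. F x $ i $ j) differentiable (at x0)"
proof -
  obtain D where "(F has_derivative D) (at x0)" using assms unfolding differentiable_def by blast
  from bounded_linear.has_derivative[OF bl_entry this] show ?thesis unfolding differentiable_def by blast
qed

lemma affine_deriv:
  "((\<lambda>Z::complex^'n^'k. C ** Z + D) has_derivative (\<lambda>h. C ** h)) (at Z0)"
proof (rule has_derivative_add_const)
  show "((**) C has_derivative (**) C) (at Z0)"
    using bounded_linear.has_derivative[OF bounded_bilinear.bounded_linear_right[OF bb_mm] has_derivative_ident]
    by blast
qed




lemma mm_neg_r: "(A::'a::ring_1^'n^'m) ** (- B) = - (A ** B)"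
  by (simp add: vec_eq_iff matrix_matrix_mult_def sum_negf)
lemma mm_neg_l: "(- A::'a::ring_1^'n^'m) ** B = - (A ** B)"
  by (simp add: vec_eq_iff matrix_matrix_mult_def sum_negf)

lemma inv_deriv:
  fixes C D Z0 :: "complex^'n^'n"
  assumes d0: "det (C ** Z0 + D) \<noteq> 0"
  shows "((\<lambda>Z. matrix_inv (C ** Z + D)) has_derivative
          (\<lambda>h. - (matrix_inv (C ** Z0 + D) ** (C ** h) ** matrix_inv (C ** Z0 + D)))) (at Z0)"
proof -
  define P where "P = (\<lambda>Z. C ** Z + D)"
  define R where "R = (\<lambda>Z. matrix_inv (P Z))"
  have Pd: "(P has_derivative (\<lambda>h. C ** h)) (at Z)" for Z
    unfolding P_def by (rule affine_deriv)
  have Pent: "(\<lambda>Z. P Z $ i $ j) differentiable (at Z)" for Z i j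
    using Pd entry_differentiable unfolding differentiable_def by blast
  have detd: "(\<lambda>Z. det (P Z)) differentiable (at Z)" for Z
    by (rule det_differentiable) (rule Pent)
  have cont: "continuous_on UNIV (\<lambda>Z. det (P Z))"
    by (rule differentiable_imp_continuous_on, rule differentiable_at_imp_differentiable_on) (rule detd)
  define U where "U = {Z. det (P Z) \<noteq> 0}"
  have U: "open U" unfolding U_def by (rule open_Collect_neq[OF cont continuous_on_const])
  have Z0U: "Z0 \<in> U" using d0 by (simp add: U_def P_def)
  define Rc where "Rc = (\<lambda>Z. (\<chi> k j. det (\<chi> a b. if b = k then (if a = j then 1 else 0) else P Z $a$b) / det (P Z)))"
  have Rcd: "Rc differentiable (at Z0)"
    unfolding Rc_def
  proof (rule vec_differentiable, simp, rule vec_differentiable, simp)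
    fix k j
    have "(\<lambda>Z. det (\<chi> a b. if b = k then (if a = j then 1 else 0) else P Z $a$b)) differentiable (at Z0)"
    proof (rule det_differentiable)
      fix a b
      show "(\<lambda>Z. (\<chi> a b. if b = k then (if a = j then 1 else 0) else P Z $a$b) $ a $ b) differentiable (at Z0)"
        by (cases "b = k") (simp_all add: Pent)
    qed
    then show "(\<lambda>Z. det (\<chi> a b. if b = k then (if a = j then 1 else 0) else P Z $a$b) / det (P Z)) differentiable (at Z0)"
      using detd d0 by (simp add: P_def)
  qed
  then obtain R' where Rc': "(Rc has_derivative R') (at Z0)" unfolding differentiable_def by blast
  have RRc: "Rc Z = R Z" if "Z \<in> U" for Z
    using that inv_cramer[of "P Z"] by (simp add: U_def Rc_def R_def vec_eq_iff)
  have Rd: "(R has_derivative R') (at Z0)"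
    by (rule has_derivative_transform_within_open[OF Rc' U Z0U RRc])
  have prod: "((\<lambda>Z. P Z ** R Z) has_derivative (\<lambda>h. P Z0 ** R' h + (C ** h) ** R Z0)) (at Z0)"
    by (rule mm_FDERIV[OF Pd Rd])
  have one: "P Z ** R Z = mat 1" if "Z \<in> U" for Z
    using that inv_right[of "P Z"] invertible_det_nz[of "P Z"] by (simp add: U_def R_def)
  have "((\<lambda>Z. P Z ** R Z) has_derivative (\<lambda>h. 0)) (at Z0)"
    by (rule has_derivative_transform_within_open[OF has_derivative_const U Z0U]) (simp add: one)
  from has_derivative_unique[OF prod this]
  have z: "P Z0 ** R' h + (C ** h) ** R Z0 = 0" for h by meson
  have inv0: "invertible (P Z0)" using d0 invertible_det_nz[of "C ** Z0 + D"] by (simp add: P_def)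
  have "R' h = - (R Z0 ** (C ** h) ** R Z0)" for h
  proof -
    have "R' h = (R Z0 ** P Z0) ** R' h" using inv_left[OF inv0] by (simp add: R_def)
    also have "\<dots> = R Z0 ** (P Z0 ** R' h)" by (simp add: matrix_mul_assoc)
    also have "P Z0 ** R' h = - ((C ** h) ** R Z0)" using z[of h] by (simp add: eq_neg_iff_add_eq_0)
    also have "R Z0 ** - ((C ** h) ** R Z0) = - (R Z0 ** (C ** h) ** R Z0)"
      by (simp add: matrix_mul_assoc mm_neg_r)
    finally show ?thesis .
  qed
  then have "R' = (\<lambda>h. - (R Z0 ** (C ** h) ** R Z0))" by (simp add: fun_eq_iff)
  with Rd show ?thesis by (simp add: R_def P_def)
qed


lemma act_deriv:
  fixes A B C D Z0 :: "complex^'n^'n" and L U W0 :: "complex^'n^'m"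
  assumes d0: "det (C ** Z0 + D) \<noteq> 0"
  defines "R0 \<equiv> matrix_inv (C ** Z0 + D)"
  shows "((\<lambda>p. ((A ** fst p + B) ** matrix_inv (C ** fst p + D),
                 (snd p + L ** fst p + U) ** matrix_inv (C ** fst p + D)))
         has_derivative
         (\<lambda>v. ((A ** Z0 + B) ** (- (R0 ** (C ** fst v) ** R0)) + (A ** fst v) ** R0,
               (W0 + L ** Z0 + U) ** (- (R0 ** (C ** fst v) ** R0)) + (snd v + L ** fst v) ** R0)))
         (at (Z0, W0))"
proof -
  have Rd: "((\<lambda>p. matrix_inv (C ** fst p + D)) has_derivative (\<lambda>v. - (R0 ** (C ** fst v) ** R0))) (at (Z0, W0))"
  proof -
    have F: "(fst has_derivative fst) (at (Z0, W0))" by (rule has_derivative_fst[OF has_derivative_ident])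
    have "((\<lambda>Z. matrix_inv (C ** Z + D)) \<circ> fst has_derivative (\<lambda>h. - (R0 ** (C ** h) ** R0)) \<circ> fst) (at (Z0, W0))"
      by (rule diff_chain_at[OF F]) (simp add: inv_deriv[OF d0] R0_def)
    then show ?thesis by (simp add: o_def)
  qed
  have lin: "((\<lambda>p. X ** fst p) has_derivative (\<lambda>v. X ** fst v)) (at (Z0, W0))" for X :: "complex^'n^'k"
    by (rule bounded_linear.has_derivative[OF bounded_bilinear.bounded_linear_right[OF bb_mm] has_derivative_fst[OF has_derivative_ident]])
  have Nd: "((\<lambda>p. A ** fst p + B) has_derivative (\<lambda>v. A ** fst v)) (at (Z0, W0))"
    by (rule has_derivative_add_const) (rule lin)
  have Wd: "((\<lambda>p. snd p + L ** fst p + U) has_derivative (\<lambda>v. snd v + L ** fst v)) (at (Z0, W0))"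
    by (intro has_derivative_add_const has_derivative_add has_derivative_snd[OF has_derivative_ident] lin)
  show ?thesis
    using has_derivative_Pair[OF mm_FDERIV[OF Nd Rd] mm_FDERIV[OF Wd Rd]] by (simp add: R0_def)
qed




lemma sumP: "(\<Sum>u\<in>(UNIV::('a::finite+'b::finite) set). f u) = (\<Sum>a\<in>UNIV. f (Inl a)) + (\<Sum>b\<in>UNIV. f (Inr b))"
  using sum.Plus[of "UNIV::'a set" "UNIV::'b set" f] by (simp add: o_def)

lemma J_ent:
  "(J_mat::real^('n::finite+'n)^('n+'n)) $ Inl a $ Inl b = 0"
  "(J_mat::real^('n::finite+'n)^('n+'n)) $ Inl a $ Inr b = (if a = b then 1 else 0)"
  "(J_mat::real^('n::finite+'n)^('n+'n)) $ Inr a $ Inl b = (if a = b then -1 else 0)"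
  "(J_mat::real^('n::finite+'n)^('n+'n)) $ Inr a $ Inr b = 0"
  by (simp_all add: J_mat_def)

lemma tMJ_ent:
  fixes M :: "real^('n::finite+'n)^('n+'n)"
  shows "(transpose M ** J_mat) $ x $ Inr b = M $ Inl b $ x"
    "(transpose M ** J_mat) $ x $ Inl b = - M $ Inr b $ x"
  by (simp_all add: matrix_matrix_mult_def transpose_def sumP J_ent if_distrib cong: if_cong)

lemma tMJM_ent:
  fixes M :: "real^('n::finite+'n)^('n+'n)"
  shows "(transpose M ** J_mat ** M) $ x $ y = (\<Sum>a\<in>UNIV. M $ Inl a $ x * M $ Inr a $ y - M $ Inr a $ x * M $ Inl a $ y)"
  by (simp add: matrix_matrix_mult_def[of "transpose M ** J_mat" M] sumP tMJ_ent sum_subtractf sum_negf add.commute)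

lemma sp_rel:
  fixes M :: "real^('n::finite+'n)^('n+'n)"
  assumes "M \<in> Sp"
  shows "transpose (blkA M) ** blkC M = transpose (blkC M) ** blkA M"
    "transpose (blkA M) ** blkD M - transpose (blkC M) ** blkB M = mat 1"
    "transpose (blkB M) ** blkD M = transpose (blkD M) ** blkB M"
proof -
  have S: "(\<Sum>a\<in>UNIV. M $ Inl a $ x * M $ Inr a $ y - M $ Inr a $ x * M $ Inl a $ y) = J_mat $ x $ y" for x y
    using tMJM_ent[of M x y] assms unfolding Sp_def by simp
  show "transpose (blkA M) ** blkC M = transpose (blkC M) ** blkA M"
  proof -
    have "(transpose (blkA M) ** blkC M) $ i $ j = (transpose (blkC M) ** blkA M) $ i $ j" for i j
      using S[of "Inl i" "Inl j"]
      by (simp add: tMJM_ent J_ent matrix_matrix_mult_def transpose_def blkA_def blkC_def sum_subtractf)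
    then show ?thesis by (simp add: vec_eq_iff)
  qed
  show "transpose (blkA M) ** blkD M - transpose (blkC M) ** blkB M = mat 1"
  proof -
    have "(transpose (blkA M) ** blkD M - transpose (blkC M) ** blkB M) $ i $ j = mat 1 $ i $ j" for i j
      using S[of "Inl i" "Inr j"]
      by (simp add: tMJM_ent J_ent matrix_matrix_mult_def transpose_def blkA_def blkB_def blkC_def blkD_def sum_subtractf mat_def)
    then show ?thesis by (simp add: vec_eq_iff)
  qed
  show "transpose (blkB M) ** blkD M = transpose (blkD M) ** blkB M"
  proof -
    have "(transpose (blkB M) ** blkD M) $ i $ j = (transpose (blkD M) ** blkB M) $ i $ j" for i j
      using S[of "Inr i" "Inr j"]
      by (simp add: tMJM_ent J_ent matrix_matrix_mult_def transpose_def blkB_def blkD_def sum_subtractf)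
    then show ?thesis by (simp add: vec_eq_iff)
  qed
qed


lemma K_ids:
  fixes A B C D Z :: "complex^'n^'n"
  assumes h1: "transpose A ** C = transpose C ** A"
    and h2: "transpose A ** D - transpose C ** B = mat 1"
    and h3: "transpose B ** D = transpose D ** B"
    and cA: "mconj A = A" and cB: "mconj B = B" and cC: "mconj C = C" and cD: "mconj D = D"
    and Zs: "transpose Z = Z"
  shows "transpose (C ** Z + D) ** (A ** Z + B) = transpose (A ** Z + B) ** (C ** Z + D)"
    "transpose (mconj (C ** Z + D)) ** (A ** Z + B) - transpose (mconj (A ** Z + B)) ** (C ** Z + D) = Z - mconj Z"
    "transpose (C ** Z + D) ** A - transpose (A ** Z + B) ** C = mat 1"
proof -
  have h4: "transpose D ** A - transpose B ** C = mat 1"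
    using arg_cong[OF h2, of transpose] by (simp add: transpose_diff matrix_transpose_mul)
  have r1: "transpose C ** A = transpose A ** C" using h1 by simp
  have r1x: "X ** transpose C ** A = X ** transpose A ** C" for X :: "complex^'n^'n"
    using h1 by (simp add: matrix_mul_assoc[symmetric])
  have r2: "transpose C ** B = transpose A ** D - mat 1" using h2 by (simp add: algebra_simps)
  have r2x: "X ** transpose C ** B = X ** transpose A ** D - X" for X :: "complex^'n^'n"
    using r2 by (simp add: matrix_mul_assoc[symmetric] mm_diff_l)
  have r3: "transpose D ** B = transpose B ** D" using h3 by simp
  have r4: "transpose D ** A = transpose B ** C + mat 1" using h4 by (simp add: algebra_simps)
  have Zc: "transpose (mconj Z) = mconj Z" by (metis Zs mconj_transpose)
  note ex = transpose_add matrix_transpose_mul Zs Zc matrix_add_ldistrib mm_add_r matrix_mul_assoc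
      mconj_add mconj_mult cA cB cC cD mm_diff_l mm_diff_r
  show "transpose (C ** Z + D) ** (A ** Z + B) = transpose (A ** Z + B) ** (C ** Z + D)"
    by (simp add: ex r1x r2x r3 r4)
  show "transpose (mconj (C ** Z + D)) ** (A ** Z + B) - transpose (mconj (A ** Z + B)) ** (C ** Z + D) = Z - mconj Z"
    by (simp add: ex r1x r2x r3 r4)
  show "transpose (C ** Z + D) ** A - transpose (A ** Z + B) ** C = mat 1"
    by (simp add: ex r1x r2x r3 r4)
qed


lemma herm_entry: "(transpose (mconj X) ** M ** X) $ i $ j = (\<Sum>b\<in>UNIV. (\<Sum>a\<in>UNIV. cnj (X$a$i) * M$a$b) * X$b$j)"
  by (simp add: matrix_matrix_mult_def transpose_def mconj_def)

lemma herm_pos: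
  fixes Y :: "real^'n^'n" and u :: "complex^'n"
  assumes Y: "posdef Y" and u: "u \<noteq> 0"
  shows "Re (\<Sum>b\<in>UNIV. (\<Sum>a\<in>UNIV. cnj (u$a) * cmat Y $ a $ b) * u$b) > 0"
proof -
  define x where "x = (\<chi> a. Re (u$a))"
  define y where "y = (\<chi> a. Im (u$a))"
  have re_t: "Re (cnj z * complex_of_real r * w) = Re z * r * Re w + Im z * r * Im w" for z w r
    by (simp add: algebra_simps)
  have "(\<Sum>b\<in>UNIV. (\<Sum>a\<in>UNIV. cnj (u$a) * cmat Y $ a $ b) * u$b)
      = (\<Sum>b\<in>UNIV. \<Sum>a\<in>UNIV. cnj (u$a) * complex_of_real (Y $ a $ b) * u$b)"
    by (simp add: sum_distrib_right cmat_def)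
  then have "Re (\<Sum>b\<in>UNIV. (\<Sum>a\<in>UNIV. cnj (u$a) * cmat Y $ a $ b) * u$b)
      = (\<Sum>b\<in>UNIV. \<Sum>a\<in>UNIV. Re (cnj (u$a) * complex_of_real (Y $ a $ b) * u$b))"
    by (simp only: Re_sum)
  also have "\<dots> = (\<Sum>b\<in>UNIV. \<Sum>a\<in>UNIV. x$a * Y$a$b * x$b + y$a * Y$a$b * y$b)"
    unfolding re_t by (simp add: x_def y_def)
  also have "\<dots> = (\<Sum>a\<in>UNIV. \<Sum>b\<in>UNIV. x$a * Y$a$b * x$b + y$a * Y$a$b * y$b)"
    by (rule sum.swap)
  also have "\<dots> = x \<bullet> (Y *v x) + y \<bullet> (Y *v y)"
    by (simp add: inner_vec_def matrix_vector_mult_def sum_distrib_left sum.distrib mult.assoc)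
  finally have e: "Re (\<Sum>b\<in>UNIV. (\<Sum>a\<in>UNIV. cnj (u$a) * cmat Y $ a $ b) * u$b) = x \<bullet> (Y *v x) + y \<bullet> (Y *v y)" .
  have nn: "0 \<le> z \<bullet> (Y *v z)" for z
    using Y unfolding posdef_def by (cases "z = 0") (auto simp: less_imp_le)
  have "x \<noteq> 0 \<or> y \<noteq> 0"
    using u by (auto simp: x_def y_def vec_eq_iff complex_eq_iff)
  then have "x \<bullet> (Y *v x) + y \<bullet> (Y *v y) > 0"
    using Y nn[of x] nn[of y] unfolding posdef_def by (auto simp: add_pos_nonneg add_nonneg_pos)
  then show ?thesis using e by simp
qed

lemma colm_mult: "(P ** (\<chi> i j. v$i)) = (\<chi> i j. (P *v v)$i)"
  by (simp add: matrix_matrix_mult_def matrix_vector_mult_def vec_eq_iff)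

lemma P_invertible:
  fixes P N Z :: "complex^'n^'n" and Y :: "real^'n^'n"
  assumes K2: "transpose (mconj P) ** N - transpose (mconj N) ** P = Z - mconj Z"
    and Y: "posdef (mIm Z)"
  shows "invertible P"
proof -
  have ker: "v = 0" if v: "P *v v = 0" for v
  proof (rule ccontr)
    assume v0: "v \<noteq> 0"
    define X :: "complex^'n^'n" where "X = (\<chi> i j. v$i)"
    have PX: "P ** X = 0" using v by (simp add: X_def colm_mult vec_eq_iff)
    have PXc: "transpose (mconj X) ** transpose (mconj P) = 0"
    proof -
      have "transpose (mconj X) ** transpose (mconj P) = transpose (mconj (P ** X))"
        by (simp add: matrix_transpose_mul mconj_mult)
      also have "\<dots> = 0" by (simp add: PX mconj_def transpose_def vec_eq_iff)
      finally show ?thesis .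
    qed
    have "transpose (mconj X) ** (Z - mconj Z) ** X
        = transpose (mconj X) ** transpose (mconj P) ** N ** X - transpose (mconj X) ** transpose (mconj N) ** (P ** X)"
      unfolding K2[symmetric] by (simp add: mm_diff_l mm_diff_r matrix_mul_assoc)
    also have "\<dots> = 0" by (simp add: PX PXc)
    finally have "csc (2 * \<i>) (transpose (mconj X) ** cmat (mIm Z) ** X) = 0"
      by (simp add: im_eq csc_mult_left csc_mult_right)
    then have "transpose (mconj X) ** cmat (mIm Z) ** X = 0"
      by (simp add: csc_def vec_eq_iff)
    then have "(transpose (mconj X) ** cmat (mIm Z) ** X) $ i $ i = 0" for i by simp
    moreover have "Re ((transpose (mconj X) ** cmat (mIm Z) ** X) $ i $ i) > 0" for i
      unfolding herm_entry using herm_pos[OF Y v0] by (simp add: X_def)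
    ultimately show False by (metis less_irrefl zero_complex.sel(1))
  qed
  have "inj ((*v) P)"
  proof (rule injI)
    fix x y assume "P *v x = P *v y"
    then have "P *v (x - y) = 0" by (simp add: matrix_vector_mult_diff_distrib)
    then show "x = y" using ker by fastforce
  qed
  then show ?thesis
    using det_nz_iff_inj_gen[OF matrix_vector_mul_linear_gen, of P] invertible_det_nz[of P]
    by (simp add: matrix_of_matrix_vector_mul)
qed


lemma mIm_transpose: "mIm (transpose Z) = transpose (mIm Z)"
  by (simp add: mIm_def transpose_def vec_eq_iff)

lemma mconj_zero: "mconj 0 = 0" by (simp add: mconj_def vec_eq_iff)

lemma core_sym:
  fixes A B C D Z R :: "complex^'n^'n"
  assumes K1: "transpose (C ** Z + D) ** (A ** Z + B) = transpose (A ** Z + B) ** (C ** Z + D)"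
    and PR: "(C ** Z + D) ** R = mat 1"
  shows "transpose ((A ** Z + B) ** R) = (A ** Z + B) ** R"
proof -
  let ?P = "C ** Z + D" and ?N = "A ** Z + B"
  have tRtP: "transpose R ** transpose ?P = mat 1"
    using arg_cong[OF PR, of transpose] by (simp add: matrix_transpose_mul)
  have "transpose (?N ** R) = transpose R ** transpose ?N ** (?P ** R)"
    by (simp add: PR matrix_transpose_mul)
  also have "\<dots> = transpose R ** (transpose ?N ** ?P) ** R" by (simp add: matrix_mul_assoc)
  also have "\<dots> = transpose R ** (transpose ?P ** ?N) ** R" by (simp only: K1)
  also have "\<dots> = (transpose R ** transpose ?P) ** ?N ** R" by (simp add: matrix_mul_assoc)
  also have "\<dots> = ?N ** R" by (simp add: tRtP)
  finally show ?thesis .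
qed

lemma core_Im:
  fixes A B C D Z R :: "complex^'n^'n"
  assumes K2: "transpose (mconj (C ** Z + D)) ** (A ** Z + B) - transpose (mconj (A ** Z + B)) ** (C ** Z + D) = Z - mconj Z"
    and PR: "(C ** Z + D) ** R = mat 1"
    and Zs: "transpose ((A ** Z + B) ** R) = (A ** Z + B) ** R"
  shows "cmat (mIm ((A ** Z + B) ** R)) = transpose (mconj R) ** cmat (mIm Z) ** R"
proof -
  let ?P = "C ** Z + D" and ?N = "A ** Z + B"
  have c1: "transpose (mconj R) ** transpose (mconj ?P) = mat 1"
    using arg_cong[OF PR, of "\<lambda>X. transpose (mconj X)"] by (simp add: matrix_transpose_mul mconj_mult mconj_mat)
  have cz: "mconj (?N ** R) = transpose (mconj R) ** transpose (mconj ?N)"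
    by (metis Zs matrix_transpose_mul mconj_mult mconj_transpose)
  have "transpose (mconj R) ** (Z - mconj Z) ** R
      = (transpose (mconj R) ** transpose (mconj ?P)) ** ?N ** R - transpose (mconj R) ** transpose (mconj ?N) ** (?P ** R)"
    unfolding K2[symmetric] by (simp add: mm_diff_l mm_diff_r matrix_mul_assoc)
  also have "\<dots> = ?N ** R - mconj (?N ** R)" by (simp add: c1 PR cz)
  finally have "csc (2 * \<i>) (transpose (mconj R) ** cmat (mIm Z) ** R) = csc (2 * \<i>) (cmat (mIm (?N ** R)))"
    by (simp add: im_eq csc_mult_left csc_mult_right)
  then show ?thesis by (simp add: csc_cancel)
qed

lemma core_posdef:
  fixes Zs R P :: "complex^'n^'n"
  assumes Y: "posdef (mIm Z)" and PR: "P ** R = mat 1"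
    and Zsym: "transpose Zs = Zs"
    and Im: "cmat (mIm Zs) = transpose (mconj R) ** cmat (mIm Z) ** R"
  shows "posdef (mIm Zs)"
  unfolding posdef_def symmetric_mat_def
proof (intro conjI allI impI)
  show "transpose (mIm Zs) = mIm Zs" by (metis Zsym mIm_transpose)
  fix x :: "real^'n" assume x0: "x \<noteq> 0"
  define xc where "xc = (\<chi> i. complex_of_real (x$i))"
  define X :: "complex^'n^'n" where "X = (\<chi> i j. xc$i)"
  define u where "u = R *v xc"
  have "P *v u = xc" using PR by (simp add: u_def matrix_vector_mul_assoc)
  moreover have "xc \<noteq> 0" using x0 by (simp add: xc_def vec_eq_iff)
  ultimately have u0: "u \<noteq> 0" by auto
  have Xc: "mconj X = X" by (simp add: X_def xc_def mconj_def vec_eq_iff)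
  fix i :: 'n
  have "(transpose (mconj X) ** cmat (mIm Zs) ** X) $ i $ i = (transpose (mconj (R ** X)) ** cmat (mIm Z) ** (R ** X)) $ i $ i"
    by (simp add: Im Xc matrix_transpose_mul mconj_mult matrix_mul_assoc)
  also have "\<dots> = (\<Sum>b\<in>UNIV. (\<Sum>a\<in>UNIV. cnj (u$a) * cmat (mIm Z) $ a $ b) * u$b)"
    unfolding herm_entry by (simp add: X_def colm_mult u_def)
  finally have e: "(transpose (mconj X) ** cmat (mIm Zs) ** X) $ i $ i = (\<Sum>b\<in>UNIV. (\<Sum>a\<in>UNIV. cnj (u$a) * cmat (mIm Z) $ a $ b) * u$b)" .
  have "(transpose (mconj X) ** cmat (mIm Zs) ** X) $ i $ i = complex_of_real (\<Sum>b\<in>UNIV. \<Sum>a\<in>UNIV. x$a * mIm Zs $ a $ b * x$b)"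
    unfolding herm_entry by (simp add: X_def xc_def cmat_def sum_distrib_right)
  also have "(\<Sum>b\<in>UNIV. \<Sum>a\<in>UNIV. x$a * mIm Zs $ a $ b * x$b) = x \<bullet> (mIm Zs *v x)"
    by (subst sum.swap) (simp add: inner_vec_def matrix_vector_mult_def sum_distrib_left mult.assoc)
  finally have "x \<bullet> (mIm Zs *v x) = Re (\<Sum>b\<in>UNIV. (\<Sum>a\<in>UNIV. cnj (u$a) * cmat (mIm Z) $ a $ b) * u$b)"
    using e by (metis Re_complex_of_real)
  then show "0 < x \<bullet> (mIm Zs *v x)" using herm_pos[OF Y u0] by simp
qed


lemma core_inv:
  fixes A B C D Z R dZ :: "complex^'n^'n" and L Uu W dW :: "complex^'n^'m"
  defines "P \<equiv> C ** Z + D" and "N \<equiv> A ** Z + B"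
  assumes Y: "posdef (mIm Z)" and Zsym: "transpose Z = Z"
    and PR: "P ** R = mat 1" and RP: "R ** P = mat 1"
    and K1: "transpose P ** N = transpose N ** P"
    and K3: "transpose P ** A - transpose N ** C = mat 1"
    and cC: "mconj C = C" and cD: "mconj D = D" and cL: "mconj L = L" and cU: "mconj Uu = Uu"
    and Im: "cmat (mIm (N ** R)) = transpose (mconj R) ** cmat (mIm Z) ** R"
    and Ysp: "posdef (mIm (N ** R))"
    and dZ: "transpose dZ = dZ"
  shows "ds2 a b (N ** R, (W + L ** Z + Uu) ** R)
            (N ** (- (R ** (C ** dZ) ** R)) + A ** dZ ** R,
             (W + L ** Z + Uu) ** (- (R ** (C ** dZ) ** R)) + (dW + L ** dZ) ** R)
         = ds2 a b (Z, W) (dZ, dW)"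
proof -
  define Zs where "Zs = N ** R"
  define W1 where "W1 = W + L ** Z + Uu"
  define Ws where "Ws = W1 ** R"
  define dZs where "dZs = N ** (- (R ** (C ** dZ) ** R)) + A ** dZ ** R"
  define dWs where "dWs = W1 ** (- (R ** (C ** dZ) ** R)) + (dW + L ** dZ) ** R"
  define cY where "cY = cmat (mIm Z)"
  define Q where "Q = cmat (matrix_inv (mIm Z))"
  define cYs where "cYs = cmat (mIm Zs)"
  define Qs where "Qs = cmat (matrix_inv (mIm Zs))"
  define V where "V = cmat (mIm W)"
  define Vs where "Vs = cmat (mIm Ws)"
  have Ysp': "posdef (mIm Zs)" using Ysp by (simp add: Zs_def)
  have QY: "Q ** cY = mat 1" and YQ: "cY ** Q = mat 1"
    using cmat_inv_l[OF Y] cmat_inv_r[OF Y] by (simp_all add: Q_def cY_def)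
  have QYs: "Qs ** cYs = mat 1" using cmat_inv_l[OF Ysp'] by (simp add: Qs_def cYs_def)
  have cYt: "transpose cY = cY" by (simp add: cY_def cmat_transpose[symmetric] posdef_sym[OF Y])
  have cYst: "transpose cYs = cYs" by (simp add: cYs_def cmat_transpose[symmetric] posdef_sym[OF Ysp'])
  have Qt: "transpose Q = Q"
    by (simp add: Q_def cmat_transpose[symmetric] inv_sym[OF posdef_invertible[OF Y] posdef_sym[OF Y]])
  have Qc: "mconj Q = Q" by (simp add: Q_def)
  have Im1: "cYs = transpose (mconj R) ** cY ** R" using Im by (simp add: cYs_def Zs_def cY_def)
  have Im2: "cYs = transpose R ** cY ** mconj R"
  proof -
    have "cYs = transpose cYs" by (simp add: cYst)
    also have "\<dots> = transpose R ** cY ** mconj R"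
      by (simp add: Im1 matrix_transpose_mul cYt mconj_transpose matrix_mul_assoc)
    finally show ?thesis .
  qed
  have tPtR: "transpose P ** transpose R = mat 1"
    using arg_cong[OF RP, of transpose] by (simp add: matrix_transpose_mul)
  have tRtP: "transpose R ** transpose P = mat 1"
    using arg_cong[OF PR, of transpose] by (simp add: matrix_transpose_mul)
  have cRP: "mconj R ** mconj P = mat 1"
    using arg_cong[OF RP, of mconj] by (simp add: mconj_mult mconj_mat)
  have cPR: "mconj P ** mconj R = mat 1"
    using arg_cong[OF PR, of mconj] by (simp add: mconj_mult mconj_mat)
  have ctPtR: "transpose (mconj P) ** transpose (mconj R) = mat 1"
    using arg_cong[OF cRP, of transpose] by (simp add: matrix_transpose_mul)
  have ctRtP: "transpose (mconj R) ** transpose (mconj P) = mat 1"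
    using arg_cong[OF cPR, of transpose] by (simp add: matrix_transpose_mul)
  have i1: "X ** transpose P ** transpose R = X" for X :: "complex^'n^'k"
    by (simp add: tPtR matrix_mul_assoc[symmetric])
  have i2: "X ** R ** P = X" for X :: "complex^'n^'k"
    by (simp add: RP matrix_mul_assoc[symmetric])
  have i3: "X ** transpose (mconj P) ** transpose (mconj R) = X" for X :: "complex^'n^'k"
    by (simp add: ctPtR matrix_mul_assoc[symmetric])
  have i4: "X ** mconj R ** mconj P = X" for X :: "complex^'n^'k"
    by (simp add: cRP matrix_mul_assoc[symmetric])
  have i5: "X ** cY ** Q = X" for X :: "complex^'n^'k"
    by (simp add: YQ matrix_mul_assoc[symmetric])
  have Qs1: "Qs = mconj P ** Q ** transpose P"
  proof -
    have "cYs ** (mconj P ** Q ** transpose P) = mat 1"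
      by (simp add: Im2 matrix_mul_assoc i4 i5 tRtP)
    then have "Qs = (Qs ** cYs) ** (mconj P ** Q ** transpose P)"
      by (simp add: matrix_mul_assoc[symmetric])
    then show ?thesis by (simp add: QYs)
  qed
  have Qs2: "Qs = P ** Q ** transpose (mconj P)"
  proof -
    have "cYs ** (P ** Q ** transpose (mconj P)) = mat 1"
      by (simp add: Im1 matrix_mul_assoc i2 i5 ctRtP)
    then have "Qs = (Qs ** cYs) ** (P ** Q ** transpose (mconj P))"
      by (simp add: matrix_mul_assoc[symmetric])
    then show ?thesis by (simp add: QYs)
  qed
  have AmNRC: "A - N ** R ** C = transpose R"
  proof -
    have "transpose P ** (A - N ** R ** C) = transpose P ** A - (transpose P ** N) ** R ** C"
      by (simp add: mm_diff_l matrix_mul_assoc)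
    also have "\<dots> = transpose P ** A - transpose N ** C"
      by (simp add: K1 matrix_mul_assoc[symmetric] PR)
    also have "\<dots> = mat 1" by (rule K3)
    finally have e: "transpose P ** (A - N ** R ** C) = mat 1" .
    have "A - N ** R ** C = (transpose R ** transpose P) ** (A - N ** R ** C)" by (simp add: tRtP)
    also have "\<dots> = transpose R ** (transpose P ** (A - N ** R ** C))" by (rule matrix_mul_assoc[symmetric])
    also have "\<dots> = transpose R" unfolding e by simp
    finally show ?thesis .
  qed
  have dZs_eq: "dZs = transpose R ** dZ ** R"
  proof -
    have "dZs = (A - N ** R ** C) ** dZ ** R"
      by (simp add: dZs_def mm_neg_r mm_diff_r matrix_mul_assoc)
    then show ?thesis by (simp add: AmNRC)
  qed
  have dZst: "transpose dZs = dZs"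
    by (simp add: dZs_eq matrix_transpose_mul dZ matrix_mul_assoc)
  have cdZs: "mconj dZs = transpose (mconj R) ** mconj dZ ** mconj R"
    by (simp add: dZs_eq mconj_mult mconj_transpose)
  have T1: "trace (Qs ** dZs ** Qs ** mconj dZs) = trace (Q ** dZ ** Q ** mconj dZ)"
  proof -
    have "Qs ** dZs ** Qs ** mconj dZs = (mconj P ** Q ** transpose P) ** dZs ** (P ** Q ** transpose (mconj P)) ** mconj dZs"
      using arg_cong2[where f="\<lambda>u v. u ** dZs ** v ** mconj dZs", OF Qs1 Qs2] .
    also have "\<dots> = mconj P ** (Q ** dZ ** Q ** mconj dZ ** mconj R)"
      by (simp add: dZs_eq mconj_mult mconj_transpose matrix_mul_assoc i1 i2 i3)
    finally have "trace (Qs ** dZs ** Qs ** mconj dZs) = trace ((Q ** dZ ** Q ** mconj dZ ** mconj R) ** mconj P)"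
      by (simp add: trace_cyc[of "mconj P"])
    also have "\<dots> = trace (Q ** dZ ** Q ** mconj dZ)" by (simp add: i4)
    finally show ?thesis .
  qed
  have Pc: "mconj P = P - csc (2 * \<i>) (C ** cY)"
  proof -
    have "P - mconj P = C ** (Z - mconj Z)"
      by (simp add: P_def mconj_add mconj_mult cC cD mm_diff_l)
    also have "\<dots> = csc (2 * \<i>) (C ** cY)"
      by (simp only: im_eq[of Z] csc_mult_right cY_def)
    finally have h: "P - mconj P = csc (2 * \<i>) (C ** cY)" .
    have "mconj P = P - (P - mconj P)" by simp
    also have "\<dots> = P - csc (2 * \<i>) (C ** cY)" by (simp only: h)
    finally show ?thesis .
  qed
  have W1c: "W1 - mconj W1 = csc (2 * \<i>) (V + L ** cY)"
  proof -
    have "W1 - mconj W1 = (W - mconj W) + L ** (Z - mconj Z)"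
      by (simp add: W1_def mconj_add mconj_mult cL cU mm_diff_l algebra_simps)
    also have "\<dots> = csc (2 * \<i>) V + csc (2 * \<i>) (L ** cY)"
      by (simp only: im_eq[of Z] im_eq[of W] csc_mult_right V_def cY_def)
    finally show ?thesis by (simp only: csc_add)
  qed
  have VsP: "Vs ** mconj P = V + L ** cY - Ws ** C ** cY"
  proof -
    have "csc (2 * \<i>) (Vs ** mconj P) = (Ws - mconj Ws) ** mconj P"
      by (simp add: Vs_def im_eq csc_mult_left)
    also have "\<dots> = Ws ** mconj P - mconj W1"
      by (simp add: mm_diff_r Ws_def mconj_mult i4)
    also have "Ws ** mconj P = W1 - csc (2 * \<i>) (Ws ** C ** cY)"
      by (simp add: Pc mm_diff_l Ws_def i2 csc_mult_right matrix_mul_assoc)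
    also have "W1 - csc (2 * \<i>) (Ws ** C ** cY) - mconj W1 = csc (2 * \<i>) (V + L ** cY - Ws ** C ** cY)"
      using W1c by (simp add: csc_diff algebra_simps)
    finally show ?thesis by (simp add: csc_cancel)
  qed
  define E where "E = dW - V ** Q ** dZ"
  have Es: "dWs - Vs ** Qs ** dZs = E ** R"
  proof -
    have "Vs ** Qs ** dZs = (Vs ** mconj P) ** Q ** dZ ** R"
      by (simp add: Qs1 dZs_eq matrix_mul_assoc i1)
    also have "\<dots> = V ** Q ** dZ ** R + L ** dZ ** R - Ws ** C ** dZ ** R"
      by (simp add: VsP mm_add_r mm_diff_r i5)
    finally have a1: "Vs ** Qs ** dZs = V ** Q ** dZ ** R + L ** dZ ** R - Ws ** C ** dZ ** R" .
    have a2: "dWs = dW ** R + L ** dZ ** R - Ws ** C ** dZ ** R"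
      by (simp add: dWs_def Ws_def mm_neg_r mm_add_r matrix_mul_assoc)
    show ?thesis by (simp add: a1 a2 E_def mm_diff_r)
  qed
  have T2: "trace (Qs ** transpose (dWs - Vs ** Qs ** dZs) ** mconj (dWs - Vs ** Qs ** dZs))
      = trace (Q ** transpose E ** mconj E)"
  proof -
    have "Qs ** transpose (dWs - Vs ** Qs ** dZs) ** mconj (dWs - Vs ** Qs ** dZs)
        = mconj P ** (Q ** transpose E ** mconj E ** mconj R)"
      unfolding Es by (simp add: Qs1 matrix_transpose_mul mconj_mult matrix_mul_assoc i1)
    then have "trace (Qs ** transpose (dWs - Vs ** Qs ** dZs) ** mconj (dWs - Vs ** Qs ** dZs))
        = trace ((Q ** transpose E ** mconj E ** mconj R) ** mconj P)"
      by (simp add: trace_cyc[of "mconj P"])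
    also have "\<dots> = trace (Q ** transpose E ** mconj E)" by (simp add: i4)
    finally show ?thesis .
  qed
  have "ds2 a b (Zs, Ws) (dZs, dWs) = ds2 a b (Z, W) (dZ, dW)"
    unfolding ds2_eq[OF Ysp' dZst] ds2_eq[OF Y dZ]
    using T1 T2 by (simp add: Qs_def Vs_def Q_def V_def E_def)
  then show ?thesis by (simp add: Zs_def Ws_def W1_def dZs_def dWs_def)
qed


lemma part2:
  fixes g :: "(real^('n+'n)^('n+'n)) \<times> ((real^'n^'m) \<times> (real^'n^'m) \<times> (real^'m^'m))"
    and p :: "(complex^'n^'n) \<times> (complex^'n^'m)"
  assumes g: "g \<in> jacobi_group" and p: "p \<in> siegel_jacobi"
  shows "jacobi_act g p \<in> siegel_jacobi \<and>
         (\<exists>f'. (jacobi_act g has_derivative f') (at p) \<and>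
            (\<forall>v. symmetric_mat (fst v) \<longrightarrow> ds2 a b (jacobi_act g p) (f' v) = ds2 a b p v))"
proof -
  obtain M l u k where gM: "g = (M, (l, u, k))" by (cases g) auto
  obtain Z W where pZ: "p = (Z, W)" by (cases p)
  have M: "M \<in> Sp" using g by (simp add: gM jacobi_group_def)
  have Y: "posdef (mIm Z)" and Zsym: "transpose Z = Z"
    using p by (simp_all add: pZ siegel_jacobi_def siegel_H_def symmetric_mat_def)
  define A where "A = cmat (blkA M)"
  define B where "B = cmat (blkB M)"
  define C where "C = cmat (blkC M)"
  define D where "D = cmat (blkD M)"
  define L where "L = cmat l"
  define Uu where "Uu = cmat u"
  note sr = sp_rel[OF M]
  have h1: "transpose A ** C = transpose C ** A"
    using arg_cong[OF sr(1), of cmat] by (simp add: cmat_mult cmat_transpose A_def C_def)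
  have h2: "transpose A ** D - transpose C ** B = mat 1"
    using arg_cong[OF sr(2), of cmat] by (simp add: cmat_mult cmat_transpose cmat_diff cmat_mat A_def B_def C_def D_def)
  have h3: "transpose B ** D = transpose D ** B"
    using arg_cong[OF sr(3), of cmat] by (simp add: cmat_mult cmat_transpose B_def D_def)
  have cA: "mconj A = A" and cB: "mconj B = B" and cC: "mconj C = C" and cD: "mconj D = D"
    and cL: "mconj L = L" and cU: "mconj Uu = Uu"
    by (simp_all add: A_def B_def C_def D_def L_def Uu_def)
  note K = K_ids[OF h1 h2 h3 cA cB cC cD Zsym]
  define P where "P = C ** Z + D"
  define N where "N = A ** Z + B"
  have invP: "invertible P" unfolding P_def by (rule P_invertible[OF K(2) Y])
  define R where "R = matrix_inv P"
  have PR: "P ** R = mat 1" and RP: "R ** P = mat 1"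
    using inv_right[OF invP] inv_left[OF invP] by (simp_all add: R_def)
  have Zs: "transpose (N ** R) = N ** R"
    using core_sym[OF K(1)] PR by (simp add: P_def N_def)
  have Im: "cmat (mIm (N ** R)) = transpose (mconj R) ** cmat (mIm Z) ** R"
    using core_Im[OF K(2)] PR Zs by (simp add: P_def N_def)
  have Ysp: "posdef (mIm (N ** R))" by (rule core_posdef[OF Y PR Zs Im])
  have act: "jacobi_act g = (\<lambda>p. ((A ** fst p + B) ** matrix_inv (C ** fst p + D),
                 (snd p + L ** fst p + Uu) ** matrix_inv (C ** fst p + D)))"
    by (simp add: fun_eq_iff jacobi_act_def gM Let_def A_def B_def C_def D_def L_def Uu_def)
  have actp: "jacobi_act g p = (N ** R, (W + L ** Z + Uu) ** R)"
    by (simp add: act pZ N_def R_def P_def)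
  have mem: "jacobi_act g p \<in> siegel_jacobi"
    using Zs Ysp by (simp add: actp siegel_jacobi_def siegel_H_def symmetric_mat_def)
  have d0: "det (C ** Z + D) \<noteq> 0" using invP invertible_det_nz[of P] by (simp add: P_def)
  define f' where "f' = (\<lambda>v. ((A ** Z + B) ** (- (R ** (C ** fst v) ** R)) + (A ** fst v) ** R,
               (W + L ** Z + Uu) ** (- (R ** (C ** fst v) ** R)) + (snd v + L ** fst v) ** R))"
  have der: "(jacobi_act g has_derivative f') (at p)"
    unfolding act pZ f'_def R_def P_def by (rule act_deriv[OF d0])
  have inv: "ds2 a b (jacobi_act g p) (f' v) = ds2 a b p v" if v: "symmetric_mat (fst v)" for v
  proof -
    obtain dZ dW where vZ: "v = (dZ, dW)" by (cases v)
    have dZ: "transpose dZ = dZ" using v by (simp add: vZ symmetric_mat_def)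
    have "ds2 a b (N ** R, (W + L ** Z + Uu) ** R)
            (N ** (- (R ** (C ** dZ) ** R)) + A ** dZ ** R,
             (W + L ** Z + Uu) ** (- (R ** (C ** dZ) ** R)) + (dW + L ** dZ) ** R)
         = ds2 a b (Z, W) (dZ, dW)"
      using core_inv[where Z=Z and C=C and R=R and D=D and A=A and B=B and L=L and Uu=Uu and W=W and dZ=dZ and dW=dW and a=a and b=b] Y Zsym PR RP K(1) K(3) cC cD cL cU Im Ysp dZ
      by (simp add: P_def N_def)
    moreover have actp2: "jacobi_act g (Z, W) = (N ** R, (W + L ** Z + Uu) ** R)" using actp pZ by simp
    ultimately show ?thesis by (simp add: actp2 f'_def vZ pZ N_def)
  qed
  show ?thesis using mem der inv by blast
qed

theorem theorem1p1:
  fixes a b :: real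
  assumes "a > 0" and "b > 0"
  shows "(\<forall>(p :: (complex^'n^'n) \<times> (complex^'n^'m)) \<in> siegel_jacobi.
            \<forall>v :: (complex^'n^'n) \<times> (complex^'n^'m).
              symmetric_mat (fst v) \<longrightarrow>
                Im (ds2 a b p v) = 0 \<and> (v \<noteq> 0 \<longrightarrow> Re (ds2 a b p v) > 0))
       \<and> (\<forall>g \<in> (jacobi_group :: ((real^('n+'n)^('n+'n)) \<times> ((real^'n^'m) \<times> (real^'n^'m) \<times> (real^'m^'m))) set).
            \<forall>p \<in> siegel_jacobi.
              jacobi_act g p \<in> siegel_jacobi \<and>
              (\<exists>f'. (jacobi_act g has_derivative f') (at p) \<and>
                 (\<forall>v. symmetric_mat (fst v) \<longrightarrow>
                    ds2 a b (jacobi_act g p) (f' v) = ds2 a b p v)))"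
  using part1[OF assms] part2 by blast


end
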